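(* Let $(a_j)_{j\ge1}$ be positive real numbers with $\sum_{j=1}^\infty a_j<\infty$, and let $\{z_j\}_{j\ge1}$ be a closed discrete subset of $\mathbb D=\{|z|<1\}$ consisting of distinct points. Then $h(z):=\sum_{j=1}^\infty\frac{a_j}{z-z_j}$ is a meromorphic function on $\mathbb D$, and there exist a real number $\lambda_0$ and a family $\{ds^2_\lambda:\lambda>\lambda_0\}$ of conformal hyperbolic metrics on $\mathbb D$ each representing the $\mathbb Z$-divisor $(h)$ of $h$. That is, each $ds^2_\lambda$ has a cusp singularity at every $z_j$ and a cone singularity of angle $2\pi(1+\operatorname{ord}_w h)$ at every zero $w$ of $h$, and is a smooth hyperbolic metric elsewhere on $\mathbb D$.
   Context: A hyperbolic metric has constant Gaussian curvature $-1$. For a divisor $\mathfrak D=\sum_j(\theta_j-1)\mathfrak P_j$ ($\theta_j\ge0$, points forming a closed discrete set), a conformal metric representing $\mathfrak D$ is a smooth conformal metric off $\operatorname{supp}\mathfrak D$ such that, writing $ds^2=e^{2u}|dz|^2$ in a coordinate $z$ centered at $\mathfrak P_j$, the function $u-(\theta_j-1)\ln|z|$ (if $\theta_j>0$; cone singularity of angle $2\pi\theta_j$), respectively $u+\ln|z|+\ln(-\ln|z|)$ (if $\theta_j=0$; cusp singularity), extends continuously to $\mathfrak P_j$. The divisor $(h)$ assigns coefficient $\operatorname{ord}_w h$ to each zero or pole $w$ of $h$; thus poles $z_j$ get $\theta=0$ and a zero of order $\ell$ gets $\theta=\ell+1$. *)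

theory Defs
  imports "HOL-Analysis.Analysis"
begin

definition unit_disc :: "complex set" where
  "unit_disc = ball 0 1"

definition closed_discrete_in :: "complex set \<Rightarrow> complex set \<Rightarrow> bool" where
  "closed_discrete_in S P \<longleftrightarrow> P \<subseteq> S \<and> (\<forall>w\<in>S. \<exists>r>0. finite (P \<inter> ball w r))"

definition has_pole_at :: "(complex \<Rightarrow> complex) \<Rightarrow> complex \<Rightarrow> bool" where
  "has_pole_at f p \<longleftrightarrow> (\<exists>r>0. \<exists>m::nat. m > 0 \<and> (\<exists>g. g holomorphic_on ball p r \<and> g p \<noteq> 0 \<and>
      (\<forall>w\<in>ball p r - {p}. f w = g w / (w - p) ^ m)))"

definition meromorphic_with_poles :: "(complex \<Rightarrow> complex) \<Rightarrow> complex set \<Rightarrow> complex set \<Rightarrow> bool" where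
  "meromorphic_with_poles f S P \<longleftrightarrow> closed_discrete_in S P \<and> f holomorphic_on (S - P) \<and>
     (\<forall>p\<in>P. has_pole_at f p)"

definition zero_of_order :: "(complex \<Rightarrow> complex) \<Rightarrow> complex \<Rightarrow> nat \<Rightarrow> bool" where
  "zero_of_order f w l \<longleftrightarrow> l > 0 \<and> (\<exists>r>0. \<exists>g. g holomorphic_on ball w r \<and> g w \<noteq> 0 \<and>
      (\<forall>x\<in>ball w r. f x = (x - w) ^ l * g x))"

definition partial_x :: "(complex \<Rightarrow> real) \<Rightarrow> complex \<Rightarrow> real" where
  "partial_x u z = deriv (\<lambda>t. u (z + of_real t)) 0"

definition partial_y :: "(complex \<Rightarrow> real) \<Rightarrow> complex \<Rightarrow> real" where
  "partial_y u z = deriv (\<lambda>t. u (z + \<i> * of_real t)) 0"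

fun Ck_on :: "nat \<Rightarrow> complex set \<Rightarrow> (complex \<Rightarrow> real) \<Rightarrow> bool" where
  "Ck_on 0 S u = continuous_on S u"
| "Ck_on (Suc k) S u = (u differentiable_on S \<and> Ck_on k S (partial_x u) \<and> Ck_on k S (partial_y u))"

definition smooth_on :: "complex set \<Rightarrow> (complex \<Rightarrow> real) \<Rightarrow> bool" where
  "smooth_on S u \<longleftrightarrow> (\<forall>k. Ck_on k S u)"

definition laplacian :: "(complex \<Rightarrow> real) \<Rightarrow> complex \<Rightarrow> real" where
  "laplacian u z = partial_x (partial_x u) z + partial_y (partial_y u) z"

text \<open>The metric e^(2u)|dz|^2 is smooth and hyperbolic (curvature -e^(-2u) Delta u = -1) on S.\<close>
definition hyperbolic_on :: "complex set \<Rightarrow> (complex \<Rightarrow> real) \<Rightarrow> bool" where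
  "hyperbolic_on S u \<longleftrightarrow> smooth_on S u \<and> (\<forall>z\<in>S. laplacian u z = exp (2 * u z))"

text \<open>Cone singularity of angle 2 pi theta (theta > 0) at p.\<close>
definition cone_sing :: "(complex \<Rightarrow> real) \<Rightarrow> complex \<Rightarrow> real \<Rightarrow> bool" where
  "cone_sing u p \<theta> \<longleftrightarrow> (\<exists>c. ((\<lambda>z. u z - (\<theta> - 1) * ln (cmod (z - p))) \<longlongrightarrow> c) (at p))"

definition cusp_sing :: "(complex \<Rightarrow> real) \<Rightarrow> complex \<Rightarrow> bool" where
  "cusp_sing u p \<longleftrightarrow>
     (\<exists>c. ((\<lambda>z. u z + ln (cmod (z - p)) + ln (- ln (cmod (z - p)))) \<longlongrightarrow> c) (at p))"

end

theory Submission
  imports Defs "HOL-Complex_Analysis.Complex_Analysis"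
begin


lemma aux_inner: assumes "w \<noteq> 0" shows "inverse (cmod w) * (v \<bullet> sgn w) = Re (v / w)"
proof -
  have n: "cmod w > 0" using assms by simp
  have 1: "v \<bullet> sgn w = (Re v * Re w + Im v * Im w)/cmod w"
    by (simp add: sgn_div_norm inner_complex_def add_divide_distrib divide_inverse algebra_simps)
  have 2: "Re (v / w) = (Re v * Re w + Im v * Im w)/(cmod w)^2"
    by (simp add: Re_divide cmod_power2)
  show ?thesis using n by (simp add: 1 2 power2_eq_square field_simps)
qed

lemma ln_cmod_deriv:
  assumes "x0 \<noteq> c"
  shows "((\<lambda>x. ln (cmod (x - c))) has_derivative (\<lambda>v. Re (v / (x0 - c)))) (at x0)"
proof -
  have n: "cmod (x0 - c) > 0" using assms by simp
  have A0: "((\<lambda>x. x - c) has_derivative (\<lambda>v. v)) (at x0)"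
    by (auto intro!: derivative_eq_intros)
  have A: "((\<lambda>x. cmod (x - c)) has_derivative (\<lambda>v. v \<bullet> sgn (x0 - c))) (at x0)"
    using has_derivative_compose[OF A0 has_derivative_norm[of "x0 - c"]] assms by simp
  have B: "(ln has_derivative (\<lambda>t. inverse (cmod (x0 - c)) * t)) (at (cmod (x0 - c)))"
    using DERIV_ln[OF n] by (simp add: has_field_derivative_def)
  have "((\<lambda>x. ln (cmod (x - c))) has_derivative (\<lambda>v. inverse (cmod (x0 - c)) * (v \<bullet> sgn (x0 - c)))) (at x0)"
    using has_derivative_compose[OF A B] by simp
  moreover have "(\<lambda>v. inverse (cmod (x0 - c)) * (v \<bullet> sgn (x0 - c))) = (\<lambda>v. Re (v / (x0 - c)))"
    using aux_inner[of "x0 - c"] assms by auto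
  ultimately show ?thesis by simp
qed

lemma abs_ln_le: fixes t :: real assumes "t > 0" shows "\<bar>ln t\<bar> \<le> t + 1 / t"
proof -
  have "ln t \<le> t - 1" using ln_le_minus_one[OF assms] .
  moreover have "ln (1/t) \<le> 1/t - 1" using ln_le_minus_one[of "1/t"] assms by simp
  moreover have "ln (1/t) = - ln t" using assms by (simp add: ln_div)
  moreover have "1 / t > 0" using assms by simp
  ultimately show ?thesis using assms unfolding abs_le_iff by linarith
qed

context
  fixes a :: "nat \<Rightarrow> real" and z :: "nat \<Rightarrow> complex"
  assumes apos: "\<forall>j. a j > 0" and asum: "summable a"
begin

lemma ser_hol:
  assumes B: "open B" and del: "\<delta> > 0"
    and far: "\<And>n x. n \<notin> E \<Longrightarrow> x \<in> B \<Longrightarrow> \<delta> \<le> cmod (x - z n)"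
  shows "\<forall>x\<in>B. summable (\<lambda>n. if n \<in> E then 0 else complex_of_real (a n) / (x - z n))"
    and "(\<lambda>x. \<Sum>n. if n \<in> E then 0 else complex_of_real (a n) / (x - z n)) holomorphic_on B"
proof -
  define f where "f = (\<lambda>n x. if n \<in> E then 0 else complex_of_real (a n) / (x - z n))"
  define f' where "f' = (\<lambda>n x. if n \<in> E then 0 else - complex_of_real (a n) / (x - z n)^2)"
  have fd: "(f n has_field_derivative f' n x) (at x)" if "x \<in> B" for n x
  proof (cases "n \<in> E")
    case True then show ?thesis by (simp add: f_def f'_def)
  next
    case False
    then have "x \<noteq> z n" using far[OF False that] del by auto
    then have "((\<lambda>x. complex_of_real (a n) / (x - z n)) has_field_derivative - complex_of_real (a n) / (x - z n)^2) (at x)"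
      by (auto intro!: derivative_eq_intros simp: power2_eq_square)
    then show ?thesis using False by (simp add: f_def f'_def)
  qed
  have bnd: "cmod (f n y) \<le> a n / \<delta>" if "y \<in> B" for n y
  proof (cases "n \<in> E")
    case True then show ?thesis using apos del by (simp add: f_def less_imp_le)
  next
    case False
    have "cmod (f n y) = a n / cmod (y - z n)" using False apos
      by (simp add: f_def norm_divide less_imp_le)
    also have "\<dots> \<le> a n / \<delta>" using far[OF False that] apos del
      by (intro divide_left_mono) (auto simp: less_imp_le intro!: mult_pos_pos)
    finally show ?thesis .
  qed
  have to_g: "\<exists>d h. 0 < d \<and> summable h \<and> range h \<subseteq> \<real>\<^sub>\<ge>\<^sub>0 \<and> (\<forall>\<^sub>F n in sequentially. \<forall>y\<in>ball x d \<inter> B. cmod(f n y) \<le> cmod (h n))"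
    if "x \<in> B" for x
  proof (intro exI conjI)
    show "summable (\<lambda>n. complex_of_real (a n / \<delta>))"
      using summable_divide[OF asum, of \<delta>] by simp
    show "range (\<lambda>n. complex_of_real (a n / \<delta>)) \<subseteq> \<real>\<^sub>\<ge>\<^sub>0"
      using apos del by (auto simp: less_imp_le)
    show "\<forall>\<^sub>F n in sequentially. \<forall>y\<in>ball x 1 \<inter> B. cmod(f n y) \<le> cmod (complex_of_real (a n / \<delta>))"
    proof (rule always_eventually, intro allI ballI)
      fix n y assume "y \<in> ball x 1 \<inter> B"
      have eq: "cmod (complex_of_real (a n / \<delta>)) = a n / \<delta>"
        unfolding norm_of_real using apos del by (intro abs_of_pos divide_pos_pos) auto
      have "cmod (f n y) \<le> a n / \<delta>" using bnd[of y n] \<open>y \<in> ball x 1 \<inter> B\<close> by blast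
      then show "cmod (f n y) \<le> cmod (complex_of_real (a n / \<delta>))"
        by (simp only: eq)
    qed
  qed simp
  obtain g g' where gg: "\<forall>x\<in>B. ((\<lambda>n. f n x) sums g x) \<and> ((\<lambda>n. f' n x) sums g' x) \<and> (g has_field_derivative g' x) (at x)"
    using series_and_derivative_comparison_complex[OF B fd to_g] by blast
  show "\<forall>x\<in>B. summable (\<lambda>n. if n \<in> E then 0 else complex_of_real (a n) / (x - z n))"
  proof
    fix x assume "x \<in> B"
    then have "(\<lambda>n. f n x) sums g x" using gg by blast
    then show "summable (\<lambda>n. if n \<in> E then 0 else complex_of_real (a n) / (x - z n))"
      unfolding f_def by (rule sums_summable)
  qed
  have "g holomorphic_on B" unfolding holomorphic_on_open[OF B] using gg by blast
  moreover have "\<And>x. x \<in> B \<Longrightarrow> g x = (\<Sum>n. f n x)"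
  proof -
    fix x assume "x \<in> B"
    then have "(\<lambda>n. f n x) sums g x" using gg by blast
    then show "g x = (\<Sum>n. f n x)" by (rule sums_unique)
  qed
  ultimately have "(\<lambda>x. \<Sum>n. f n x) holomorphic_on B" by (rule holomorphic_transform)
  then show "(\<lambda>x. \<Sum>n. if n \<in> E then 0 else complex_of_real (a n) / (x - z n)) holomorphic_on B"
    unfolding f_def .
qed

lemma ser_phi:
  assumes B: "open B" "convex B" "B \<subseteq> ball 0 1" and zD: "\<And>n. cmod (z n) < 1" and del: "\<delta> > 0"
    and far: "\<And>n x. n \<notin> E \<Longrightarrow> x \<in> B \<Longrightarrow> \<delta> \<le> cmod (x - z n)"
  shows "\<forall>x\<in>B. summable (\<lambda>n. if n \<in> E then 0 else a n * ln (cmod (x - z n)))"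
    and "\<forall>x\<in>B. ((\<lambda>x. \<Sum>n. if n \<in> E then 0 else a n * ln (cmod (x - z n))) has_derivative
             (\<lambda>v. Re ((\<Sum>n. if n \<in> E then 0 else complex_of_real (a n) / (x - z n)) * v))) (at x)"
proof -
  define f where "f = (\<lambda>n x. if n \<in> E then 0 else a n * ln (cmod (x - z n)))"
  define fc where "fc = (\<lambda>n x. if n \<in> E then 0 else complex_of_real (a n) / (x - z n))"
  define C where "C = 2 + 1 / \<delta>"
  have bnd: "norm (f n x) \<le> a n * C" if "x \<in> B" for n x
  proof (cases "n \<in> E")
    case True then show ?thesis using apos del by (simp add: f_def C_def less_imp_le)
  next
    case False
    let ?t = "cmod (x - z n)"
    have t1: "\<delta> \<le> ?t" using far[OF False that] .
    have "cmod x < 1" using B(3) that by auto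
    moreover have "?t \<le> cmod x + cmod (z n)" by (rule norm_triangle_ineq4)
    ultimately have t2: "?t < 2" using zD[of n] by linarith
    have tp: "?t > 0" using t1 del by linarith
    have A: "\<bar>ln ?t\<bar> \<le> ?t + 1 / ?t" using tp by (rule abs_ln_le)
    have "1 / ?t \<le> 1 / \<delta>" using t1 del tp by (intro divide_left_mono) (auto intro!: mult_pos_pos)
    then have "?t + 1 / ?t \<le> C" unfolding C_def using t2 by linarith
    with A have lnC: "\<bar>ln ?t\<bar> \<le> C" by linarith
    have "norm (f n x) = a n * \<bar>ln ?t\<bar>" using False apos by (simp add: f_def abs_mult less_imp_le)
    also have "\<dots> \<le> a n * C" using lnC apos by (intro mult_left_mono) (auto simp: less_imp_le)
    finally show ?thesis .
  qed
  show sf: "\<forall>x\<in>B. summable (\<lambda>n. if n \<in> E then 0 else a n * ln (cmod (x - z n)))"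
  proof
    fix x assume "x \<in> B"
    have "\<exists>N. \<forall>n\<ge>N. norm (f n x) \<le> a n * C" using bnd[OF \<open>x \<in> B\<close>] by blast
    moreover have "summable (\<lambda>n. a n * C)" by (rule summable_mult2[OF asum])
    ultimately have "summable (\<lambda>n. f n x)" by (rule summable_comparison_test)
    then show "summable (\<lambda>n. if n \<in> E then 0 else a n * ln (cmod (x - z n)))"
      unfolding f_def .
  qed
  have bndc: "norm (fc n x) \<le> a n / \<delta>" if "x \<in> B" for n x
  proof (cases "n \<in> E")
    case True then show ?thesis using apos del by (simp add: fc_def less_imp_le)
  next
    case False
    have "cmod (fc n x) = a n / cmod (x - z n)" using False apos
      by (simp add: fc_def norm_divide less_imp_le)
    also have "\<dots> \<le> a n / \<delta>" using far[OF False that] apos del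
      by (intro divide_left_mono) (auto simp: less_imp_le intro!: mult_pos_pos)
    finally show ?thesis .
  qed
  have ul: "uniform_limit B (\<lambda>n x. \<Sum>i<n. fc i x) (\<lambda>x. suminf (\<lambda>i. fc i x)) sequentially"
    using bndc summable_divide[OF asum, of \<delta>] by (intro Weierstrass_m_test[where M="\<lambda>n. a n / \<delta>"]) auto
  have fd: "(f n has_derivative (\<lambda>v. Re (fc n x * v))) (at x within B)" if "x \<in> B" for n x
  proof (cases "n \<in> E")
    case True then show ?thesis by (simp add: f_def fc_def)
  next
    case False
    then have "x \<noteq> z n" using far[OF False that] del by auto
    have D: "((\<lambda>y. a n * ln (cmod (y - z n))) has_derivative (\<lambda>h. a n * Re (h / (x - z n)))) (at x)"
      using has_derivative_mult[OF has_derivative_const ln_cmod_deriv[OF \<open>x \<noteq> z n\<close>], of "a n"] by simp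
    have eq: "(\<lambda>h. a n * Re (h / (x - z n))) = (\<lambda>v. Re (fc n x * v))"
      using False by (simp add: fc_def fun_eq_iff times_divide_eq_right[symmetric] del: times_divide_eq_right)
    have "((\<lambda>y. a n * ln (cmod (y - z n))) has_derivative (\<lambda>v. Re (fc n x * v))) (at x)"
      using D unfolding eq .
    then show ?thesis using False by (simp add: f_def has_derivative_at_withinI)
  qed
  show "\<forall>x\<in>B. ((\<lambda>x. \<Sum>n. if n \<in> E then 0 else a n * ln (cmod (x - z n))) has_derivative
             (\<lambda>v. Re ((\<Sum>n. if n \<in> E then 0 else complex_of_real (a n) / (x - z n)) * v))) (at x)"
  proof
    fix x assume x: "x \<in> B"
    have unif: "\<forall>\<^sub>F n in sequentially. \<forall>x\<in>B. \<forall>v. norm (sum (\<lambda>i. Re (fc i x * v)) {..<n} - Re ((\<Sum>i. fc i x) * v)) \<le> e * norm v"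
      if "e > 0" for e
    proof -
      have "\<forall>\<^sub>F n in sequentially. \<forall>x\<in>B. dist (\<Sum>i<n. fc i x) (\<Sum>i. fc i x) < e"
        using uniform_limitD[OF ul that] .
      then show ?thesis
      proof (rule eventually_mono)
        fix n assume H: "\<forall>x\<in>B. dist (\<Sum>i<n. fc i x) (\<Sum>i. fc i x) < e"
        show "\<forall>x\<in>B. \<forall>v. norm (sum (\<lambda>i. Re (fc i x * v)) {..<n} - Re ((\<Sum>i. fc i x) * v)) \<le> e * norm v"
        proof (intro ballI allI)
          fix y v assume y: "y \<in> B"
          have "sum (\<lambda>i. Re (fc i y * v)) {..<n} - Re ((\<Sum>i. fc i y) * v) = Re (((\<Sum>i<n. fc i y) - (\<Sum>i. fc i y)) * v)"
            by (simp add: sum_distrib_right left_diff_distrib)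
          then have "norm (sum (\<lambda>i. Re (fc i y * v)) {..<n} - Re ((\<Sum>i. fc i y) * v)) \<le> cmod ((\<Sum>i<n. fc i y) - (\<Sum>i. fc i y)) * cmod v"
            by (metis abs_Re_le_cmod norm_mult real_norm_def)
          also have "\<dots> \<le> e * cmod v"
            using H y by (intro mult_right_mono) (auto simp: dist_norm less_imp_le)
          finally show "norm (sum (\<lambda>i. Re (fc i y * v)) {..<n} - Re ((\<Sum>i. fc i y) * v)) \<le> e * norm v" by simp
        qed
      qed
    qed
    have "summable (\<lambda>n. f n x)" using sf x by (simp add: f_def)
    then obtain g where g: "\<forall>x\<in>B. (\<lambda>n. f n x) sums g x \<and> (g has_derivative (\<lambda>v. Re ((\<Sum>i. fc i x) * v))) (at x within B)"
      using has_derivative_series[OF B(2) fd unif x] by (metis summable_sums)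
    have gx: "(g has_derivative (\<lambda>v. Re ((\<Sum>i. fc i x) * v))) (at x within B)"
      using g x by blast
    then have gx': "(g has_derivative (\<lambda>v. Re ((\<Sum>i. fc i x) * v))) (at x)"
      by (simp only: at_within_open[OF x B(1)])
    have geq: "g y = (\<Sum>n. f n y)" if "y \<in> B" for y
    proof -
      have "(\<lambda>n. f n y) sums g y" using g that by blast
      then show ?thesis by (rule sums_unique)
    qed
    have "((\<lambda>x. \<Sum>n. f n x) has_derivative (\<lambda>v. Re ((\<Sum>i. fc i x) * v))) (at x)"
      by (rule has_derivative_transform_within_open[OF gx' B(1) x geq])
    then show "((\<lambda>x. \<Sum>n. if n \<in> E then 0 else a n * ln (cmod (x - z n))) has_derivative
             (\<lambda>v. Re ((\<Sum>n. if n \<in> E then 0 else complex_of_real (a n) / (x - z n)) * v))) (at x)"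
      unfolding f_def fc_def .
  qed
qed

end


lemma PX:
  assumes "(f has_derivative (\<lambda>v. Re v * A + Im v * B)) (at x)"
  shows "partial_x f x = A" and "partial_y f x = B"
proof -
  have 1: "((\<lambda>t::real. x + of_real t) has_derivative (\<lambda>t. of_real t)) (at 0)"
    by (auto intro!: derivative_eq_intros)
  have fx: "(f has_derivative (\<lambda>v. Re v * A + Im v * B)) (at (x + of_real 0))"
    using assms by simp
  have "((\<lambda>t. f (x + of_real t)) has_derivative (\<lambda>t. Re (complex_of_real t) * A + Im (complex_of_real t) * B)) (at 0)"
    using has_derivative_compose[OF 1 fx] .
  moreover have "(\<lambda>t. Re (complex_of_real t) * A + Im (complex_of_real t) * B) = (\<lambda>t. A * t)"
    by (simp add: fun_eq_iff mult.commute)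
  ultimately have "((\<lambda>t. f (x + of_real t)) has_field_derivative A) (at 0)"
    unfolding has_field_derivative_def by simp
  then show "partial_x f x = A" unfolding partial_x_def by (rule DERIV_imp_deriv)
  have 2: "((\<lambda>t::real. x + \<i> * of_real t) has_derivative (\<lambda>t. \<i> * of_real t)) (at 0)"
    by (auto intro!: derivative_eq_intros)
  have fy: "(f has_derivative (\<lambda>v. Re v * A + Im v * B)) (at (x + \<i> * of_real 0))"
    using assms by simp
  have "((\<lambda>t. f (x + \<i> * of_real t)) has_derivative (\<lambda>t. Re (\<i> * complex_of_real t) * A + Im (\<i> * complex_of_real t) * B)) (at 0)"
    using has_derivative_compose[OF 2 fy] .
  moreover have "(\<lambda>t. Re (\<i> * complex_of_real t) * A + Im (\<i> * complex_of_real t) * B) = (\<lambda>t. B * t)"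
    by (simp add: fun_eq_iff mult.commute)
  ultimately have "((\<lambda>t. f (x + \<i> * of_real t)) has_field_derivative B) (at 0)"
    unfolding has_field_derivative_def by simp
  then show "partial_y f x = B" unfolding partial_y_def by (rule DERIV_imp_deriv)
qed

lemma partial_cong:
  assumes W: "open W" and x: "x \<in> W" and eq: "\<And>y. y \<in> W \<Longrightarrow> f y = g y"
  shows "partial_x f x = partial_x g x" and "partial_y f x = partial_y g x"
proof -
  obtain e where e: "e > 0" "ball x e \<subseteq> W" using W x openE by blast
  have evx: "eventually (\<lambda>t. f (x + of_real t) = g (x + of_real t)) (nhds (0::real))"
    unfolding eventually_nhds_metric
  proof (intro exI conjI allI impI)
    fix t :: real assume "dist t 0 < e"
    then have "x + of_real t \<in> ball x e" by (simp add: dist_norm)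
    then show "f (x + of_real t) = g (x + of_real t)" using e eq by blast
  qed (rule e(1))
  then show "partial_x f x = partial_x g x" unfolding partial_x_def by (rule deriv_cong_ev) simp
  have evy: "eventually (\<lambda>t. f (x + \<i> * of_real t) = g (x + \<i> * of_real t)) (nhds (0::real))"
    unfolding eventually_nhds_metric
  proof (intro exI conjI allI impI)
    fix t :: real assume "dist t 0 < e"
    then have "x + \<i> * of_real t \<in> ball x e" by (simp add: dist_norm norm_mult)
    then show "f (x + \<i> * of_real t) = g (x + \<i> * of_real t)" using e eq by blast
  qed (rule e(1))
  then show "partial_y f x = partial_y g x" unfolding partial_y_def by (rule deriv_cong_ev) simp
qed

lemma Ck_cong:
  assumes W: "open W"
  shows "(\<And>y. y \<in> W \<Longrightarrow> f y = g y) \<Longrightarrow> Ck_on k W f \<Longrightarrow> Ck_on k W g"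
proof (induction k arbitrary: f g)
  case 0
  have "continuous_on W f \<longleftrightarrow> continuous_on W g" by (rule continuous_on_cong) (use 0 in auto)
  then show ?case using 0 by simp
next
  case (Suc k)
  have d: "g differentiable_on W"
    unfolding differentiable_on_def
  proof
    fix x assume x: "x \<in> W"
    have "f differentiable (at x within W)" using Suc.prems(2) x by (simp add: differentiable_on_def)
    then obtain D where "(f has_derivative D) (at x within W)" unfolding differentiable_def by blast
    then have "(g has_derivative D) (at x within W)"
      by (rule has_derivative_transform_within_open[OF _ W x]) (use Suc.prems(1) in blast)
    then show "g differentiable (at x within W)" unfolding differentiable_def by blast
  qed
  have px: "Ck_on k W (partial_x g)"
    by (rule Suc.IH[of "partial_x f"]) (use partial_cong[OF W _ Suc.prems(1)] Suc.prems(2) in auto)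
  have py: "Ck_on k W (partial_y g)"
    by (rule Suc.IH[of "partial_y f"]) (use partial_cong[OF W _ Suc.prems(1)] Suc.prems(2) in auto)
  show ?case using d px py by simp
qed

locale hyp_setup =
  fixes W :: "complex set" and \<psi> :: "complex \<Rightarrow> real" and H :: "complex \<Rightarrow> complex"
  assumes W: "open W" and pos: "\<And>x. x \<in> W \<Longrightarrow> \<psi> x > 0" and Hh: "H holomorphic_on W"
    and dpsi: "\<And>x. x \<in> W \<Longrightarrow> (\<psi> has_derivative (\<lambda>v. Re (H x * v))) (at x)"
begin

inductive_set RR :: "(complex \<Rightarrow> real) set" where
  re: "f holomorphic_on W \<Longrightarrow> (\<lambda>x. Re (f x)) \<in> RR"
| inv: "(\<lambda>x. 1 / \<psi> x) \<in> RR"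
| add: "f \<in> RR \<Longrightarrow> g \<in> RR \<Longrightarrow> (\<lambda>x. f x + g x) \<in> RR"
| mul: "f \<in> RR \<Longrightarrow> g \<in> RR \<Longrightarrow> (\<lambda>x. f x * g x) \<in> RR"

lemma Re_deriv:
  assumes "f holomorphic_on W" "x \<in> W"
  shows "((\<lambda>y. Re (f y)) has_derivative (\<lambda>v. Re v * Re (deriv f x) + Im v * Re (\<i> * deriv f x))) (at x)"
proof -
  have "(f has_field_derivative deriv f x) (at x)" using holomorphic_derivI[OF assms(1) W assms(2)] .
  then have "(f has_derivative (\<lambda>v. deriv f x * v)) (at x)" by (simp add: has_field_derivative_def)
  from has_derivative_Re[OF this]
  have "((\<lambda>y. Re (f y)) has_derivative (\<lambda>v. Re (deriv f x * v))) (at x)" .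
  moreover have "(\<lambda>v. Re (deriv f x * v)) = (\<lambda>v. Re v * Re (deriv f x) + Im v * Re (\<i> * deriv f x))"
    by (simp add: fun_eq_iff algebra_simps)
  ultimately show ?thesis by simp
qed

lemma inv_deriv:
  assumes "x \<in> W"
  shows "((\<lambda>y. 1 / \<psi> y) has_derivative (\<lambda>v. Re v * (Re (- H x) * (1 / \<psi> x * (1 / \<psi> x))) + Im v * (Re (- (\<i> * H x)) * (1 / \<psi> x * (1 / \<psi> x))))) (at x)"
proof -
  have p: "\<psi> x \<noteq> 0" using pos[OF assms] by simp
  have "((\<lambda>y. inverse (\<psi> y)) has_derivative (\<lambda>h. - (inverse (\<psi> x) * Re (H x * h) * inverse (\<psi> x)))) (at x)"
    using Deriv.has_derivative_inverse[OF p dpsi[OF assms]] .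
  moreover have "(\<lambda>h. - (inverse (\<psi> x) * Re (H x * h) * inverse (\<psi> x))) = (\<lambda>v. Re v * (Re (- H x) * (1 / \<psi> x * (1 / \<psi> x))) + Im v * (Re (- (\<i> * H x)) * (1 / \<psi> x * (1 / \<psi> x))))"
    by (simp add: fun_eq_iff divide_inverse algebra_simps)
  ultimately show ?thesis by (simp add: divide_inverse)
qed

lemma RR_diff:
  assumes "f \<in> RR"
  shows "\<exists>fx fy. fx \<in> RR \<and> fy \<in> RR \<and> (\<forall>x\<in>W. (f has_derivative (\<lambda>v. Re v * fx x + Im v * fy x)) (at x))"
  using assms
proof induction
  case (re f)
  have h1: "deriv f holomorphic_on W" using holomorphic_deriv[OF re W] .
  have h2: "(\<lambda>x. \<i> * deriv f x) holomorphic_on W" using h1 by (auto intro: holomorphic_intros)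
  show ?case
    by (rule exI[of _ "\<lambda>x. Re (deriv f x)"], rule exI[of _ "\<lambda>x. Re (\<i> * deriv f x)"])
       (use RR.re[OF h1] RR.re[OF h2] Re_deriv[OF re] in auto)
next
  case inv
  have h1: "(\<lambda>x. - H x) holomorphic_on W" using Hh by (auto intro: holomorphic_intros)
  have h2: "(\<lambda>x. - (\<i> * H x)) holomorphic_on W" using holomorphic_on_minus[OF holomorphic_on_mult[OF holomorphic_on_const Hh]] .
  have m1: "(\<lambda>x. Re (- H x) * (1 / \<psi> x * (1 / \<psi> x))) \<in> RR"
    using RR.mul[OF RR.re[OF h1] RR.mul[OF RR.inv RR.inv]] .
  have m2: "(\<lambda>x. Re (- (\<i> * H x)) * (1 / \<psi> x * (1 / \<psi> x))) \<in> RR"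
    using RR.mul[OF RR.re[OF h2] RR.mul[OF RR.inv RR.inv]] .
  show ?case
  proof (intro exI conjI)
    show "\<forall>x\<in>W. ((\<lambda>x. 1 / \<psi> x) has_derivative (\<lambda>v. Re v * (Re (- H x) * (1 / \<psi> x * (1 / \<psi> x))) + Im v * (Re (- (\<i> * H x)) * (1 / \<psi> x * (1 / \<psi> x))))) (at x)"
      using inv_deriv by simp
  qed (rule m1, rule m2)
next
  case (add f g)
  then obtain fx fy gx gy where A: "fx \<in> RR" "fy \<in> RR" "gx \<in> RR" "gy \<in> RR"
    "\<forall>x\<in>W. (f has_derivative (\<lambda>v. Re v * fx x + Im v * fy x)) (at x)"
    "\<forall>x\<in>W. (g has_derivative (\<lambda>v. Re v * gx x + Im v * gy x)) (at x)" by blast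
  have D: "((\<lambda>y. f y + g y) has_derivative (\<lambda>v. Re v * (fx x + gx x) + Im v * (fy x + gy x))) (at x)"
    if "x \<in> W" for x
  proof -
    have "((\<lambda>y. f y + g y) has_derivative (\<lambda>v. (Re v * fx x + Im v * fy x) + (Re v * gx x + Im v * gy x))) (at x)"
      using has_derivative_add[OF A(5)[rule_format, OF that] A(6)[rule_format, OF that]] .
    then show ?thesis by (simp add: algebra_simps)
  qed
  show ?case
    by (rule exI[of _ "\<lambda>x. fx x + gx x"], rule exI[of _ "\<lambda>x. fy x + gy x"])
       (use RR.add[OF A(1) A(3)] RR.add[OF A(2) A(4)] D in blast)
next
  case (mul f g)
  then obtain fx fy gx gy where A: "fx \<in> RR" "fy \<in> RR" "gx \<in> RR" "gy \<in> RR"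
    "\<forall>x\<in>W. (f has_derivative (\<lambda>v. Re v * fx x + Im v * fy x)) (at x)"
    "\<forall>x\<in>W. (g has_derivative (\<lambda>v. Re v * gx x + Im v * gy x)) (at x)" by blast
  have D: "((\<lambda>y. f y * g y) has_derivative (\<lambda>v. Re v * (f x * gx x + fx x * g x) + Im v * (f x * gy x + fy x * g x))) (at x)"
    if "x \<in> W" for x
  proof -
    have "((\<lambda>y. f y * g y) has_derivative (\<lambda>v. f x * (Re v * gx x + Im v * gy x) + (Re v * fx x + Im v * fy x) * g x)) (at x)"
      using has_derivative_mult[OF A(5)[rule_format, OF that] A(6)[rule_format, OF that]] .
    then show ?thesis by (simp add: algebra_simps)
  qed
  have m1: "(\<lambda>x. f x * gx x + fx x * g x) \<in> RR"
    using RR.add[OF RR.mul[OF \<open>f \<in> RR\<close> A(3)] RR.mul[OF A(1) \<open>g \<in> RR\<close>]] .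
  have m2: "(\<lambda>x. f x * gy x + fy x * g x) \<in> RR"
    using RR.add[OF RR.mul[OF \<open>f \<in> RR\<close> A(4)] RR.mul[OF A(2) \<open>g \<in> RR\<close>]] .
  show ?case
    by (rule exI[of _ "\<lambda>x. f x * gx x + fx x * g x"], rule exI[of _ "\<lambda>x. f x * gy x + fy x * g x"])
       (use m1 m2 D in blast)
qed

lemma deriv_Ck:
  assumes "\<forall>x\<in>W. (f has_derivative (\<lambda>v. Re v * fx x + Im v * fy x)) (at x)"
    and "\<And>k. Ck_on k W fx" and "\<And>k. Ck_on k W fy"
  shows "Ck_on k W f"
proof (cases k)
  case 0
  have "continuous_on W f"
    using assms(1) by (intro continuous_at_imp_continuous_on) (blast intro: has_derivative_continuous)
  then show ?thesis using 0 by simp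
next
  case (Suc m)
  have d: "f differentiable_on W" unfolding differentiable_on_def differentiable_def
    using assms(1) by (blast intro: has_derivative_at_withinI)
  have "Ck_on m W (partial_x f)"
    by (rule Ck_cong[OF W _ assms(2)[of m]]) (use PX(1) assms(1) in auto)
  moreover have "Ck_on m W (partial_y f)"
    by (rule Ck_cong[OF W _ assms(3)[of m]]) (use PX(2) assms(1) in auto)
  ultimately show ?thesis using d Suc by simp
qed

lemma RR_Ck: "f \<in> RR \<Longrightarrow> Ck_on k W f"
proof (induction k arbitrary: f)
  case 0
  then obtain fx fy where "fx \<in> RR" "fy \<in> RR" "\<forall>x\<in>W. (f has_derivative (\<lambda>v. Re v * fx x + Im v * fy x)) (at x)"
    using RR_diff by blast
  have "continuous_on W f"
    using \<open>\<forall>x\<in>W. _\<close> by (intro continuous_at_imp_continuous_on) (blast intro: has_derivative_continuous)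
  then show ?case by simp
next
  case (Suc k)
  then obtain fx fy where A: "fx \<in> RR" "fy \<in> RR" "\<forall>x\<in>W. (f has_derivative (\<lambda>v. Re v * fx x + Im v * fy x)) (at x)"
    using RR_diff by blast
  have d: "f differentiable_on W" unfolding differentiable_on_def differentiable_def
    using A(3) by (blast intro: has_derivative_at_withinI)
  have "Ck_on k W (partial_x f)"
    by (rule Ck_cong[OF W _ Suc.IH[OF A(1)]]) (use PX(1) A(3) in auto)
  moreover have "Ck_on k W (partial_y f)"
    by (rule Ck_cong[OF W _ Suc.IH[OF A(2)]]) (use PX(2) A(3) in auto)
  ultimately show ?case using d by simp
qed

end


lemma exp2ln: fixes a b :: real assumes "a > 0" "b > 0"
  shows "exp (2 * (ln a - ln b)) = a^2 / b^2"
  using assms by (simp add: exp_double exp_diff power_divide)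

lemma alg1: "Re (c * v) - inverse p * Re (Hc * v) =
   Re v * (Re c + Re (- Hc) * (1 / p)) + Im v * (Re (\<i> * c) + Re (- (\<i> * Hc)) * (1 / p))"
  by (simp add: algebra_simps divide_inverse)

lemma alg2: fixes p :: real assumes "p > 0"
  shows "Re q' + Re (- H') * (1/p) + Re (- Hc) * (Re (- Hc) * (1/p*(1/p))) +
    (Re (\<i> * (\<i> * q')) + Re (\<i> * - (\<i> * H')) * (1/p) + Re (- (\<i> * Hc)) * (Re (- (\<i> * Hc)) * (1/p*(1/p))))
    = (cmod Hc)^2 / p^2"
  unfolding cmod_power2 using assms by (simp add: power2_eq_square field_simps)

lemma deriv_cm:
  assumes "f holomorphic_on W" "open W" "x \<in> W"
  shows "deriv (\<lambda>y. c * f y) x = c * deriv f x" and "deriv (\<lambda>y. - f y) x = - deriv f x"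
proof -
  have d: "(f has_field_derivative deriv f x) (at x)" using holomorphic_derivI[OF assms] .
  show "deriv (\<lambda>y. c * f y) x = c * deriv f x" by (rule DERIV_imp_deriv) (rule DERIV_cmult[OF d])
  show "deriv (\<lambda>y. - f y) x = - deriv f x" by (rule DERIV_imp_deriv) (rule DERIV_minus[OF d])
qed

context hyp_setup
begin

lemma G:
  assumes A: "A holomorphic_on W" and B: "B holomorphic_on W" and x: "x \<in> W"
  shows "((\<lambda>y. Re (A y) + Re (B y) * (1 / \<psi> y)) has_derivative
     (\<lambda>v. Re v * (Re (deriv A x) + Re (deriv B x) * (1 / \<psi> x) + Re (B x) * (Re (- H x) * (1 / \<psi> x * (1 / \<psi> x))))
        + Im v * (Re (\<i> * deriv A x) + Re (\<i> * deriv B x) * (1 / \<psi> x) + Re (B x) * (Re (- (\<i> * H x)) * (1 / \<psi> x * (1 / \<psi> x)))))) (at x)"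
proof -
  note dA = Re_deriv[OF A x]
  note dB = Re_deriv[OF B x]
  note dI = inv_deriv[OF x]
  have "((\<lambda>y. Re (A y) + Re (B y) * (1 / \<psi> y)) has_derivative
     (\<lambda>v. (Re v * Re (deriv A x) + Im v * Re (\<i> * deriv A x)) +
          (Re (B x) * (Re v * (Re (- H x) * (1 / \<psi> x * (1 / \<psi> x))) + Im v * (Re (- (\<i> * H x)) * (1 / \<psi> x * (1 / \<psi> x))))
           + (Re v * Re (deriv B x) + Im v * Re (\<i> * deriv B x)) * (1 / \<psi> x)))) (at x)"
    using has_derivative_add[OF dA has_derivative_mult[OF dB dI]] .
  then show ?thesis by (simp add: algebra_simps)
qed

lemma hyp_main:
  assumes hh: "h holomorphic_on W" and hnz: "\<And>x. x \<in> W \<Longrightarrow> h x \<noteq> 0"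
    and Hn: "\<And>x. x \<in> W \<Longrightarrow> cmod (H x) = cmod (h x)"
  shows "hyperbolic_on W (\<lambda>x. ln (cmod (h x)) - ln (\<psi> x))"
proof -
  define q where "q = (\<lambda>x. deriv h x / h x)"
  have qh: "q holomorphic_on W" unfolding q_def
    using holomorphic_on_divide[OF holomorphic_deriv[OF hh W] hh] hnz by blast
  have nH: "(\<lambda>x. - H x) holomorphic_on W" using holomorphic_on_minus[OF Hh] .
  have niH: "(\<lambda>x. - (\<i> * H x)) holomorphic_on W" using holomorphic_on_minus[OF holomorphic_on_mult[OF holomorphic_on_const Hh]] .
  have iq: "(\<lambda>x. \<i> * q x) holomorphic_on W" using holomorphic_on_mult[OF holomorphic_on_const qh] .
  define ux where "ux = (\<lambda>x. Re (q x) + Re (- H x) * (1 / \<psi> x))"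
  define uy where "uy = (\<lambda>x. Re (\<i> * q x) + Re (- (\<i> * H x)) * (1 / \<psi> x))"
  define u where "u = (\<lambda>x. ln (cmod (h x)) - ln (\<psi> x))"
  have du: "(u has_derivative (\<lambda>v. Re v * ux x + Im v * uy x)) (at x)" if x: "x \<in> W" for x
  proof -
    have h1: "(h has_derivative (\<lambda>v. deriv h x * v)) (at x)"
      using holomorphic_derivI[OF hh W x] by (simp add: has_field_derivative_def)
    have h2: "((\<lambda>w. ln (cmod (w - 0))) has_derivative (\<lambda>v. Re (v / (h x - 0)))) (at (h x))"
      using ln_cmod_deriv hnz[OF x] by blast
    have L1: "((\<lambda>y. ln (cmod (h y - 0))) has_derivative (\<lambda>v. Re (deriv h x * v / (h x - 0)))) (at x)"
      using has_derivative_compose[OF h1 h2] .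
    have p: "\<psi> x > 0" using pos[OF x] .
    have l2: "(ln has_derivative (\<lambda>t. inverse (\<psi> x) * t)) (at (\<psi> x))"
      using DERIV_ln[OF p] by (simp add: has_field_derivative_def)
    have L2: "((\<lambda>y. ln (\<psi> y)) has_derivative (\<lambda>v. inverse (\<psi> x) * Re (H x * v))) (at x)"
      using has_derivative_compose[OF dpsi[OF x] l2] .
    have "(u has_derivative (\<lambda>v. Re (deriv h x * v / (h x - 0)) - inverse (\<psi> x) * Re (H x * v))) (at x)"
      unfolding u_def using has_derivative_diff[OF L1 L2] by simp
    moreover have "(\<lambda>v. Re (deriv h x * v / (h x - 0)) - inverse (\<psi> x) * Re (H x * v)) = (\<lambda>v. Re v * ux x + Im v * uy x)"
    proof
      fix v
      have "deriv h x * v / (h x - 0) = q x * v" by (simp add: q_def)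
      then show "Re (deriv h x * v / (h x - 0)) - inverse (\<psi> x) * Re (H x * v) = Re v * ux x + Im v * uy x"
        unfolding ux_def uy_def using alg1[of "q x" v "\<psi> x" "H x"] by simp
    qed
    ultimately show ?thesis by simp
  qed
  have uxR: "ux \<in> RR" unfolding ux_def using RR.add[OF RR.re[OF qh] RR.mul[OF RR.re[OF nH] RR.inv]] .
  have uyR: "uy \<in> RR" unfolding uy_def using RR.add[OF RR.re[OF iq] RR.mul[OF RR.re[OF niH] RR.inv]] .
  have sm: "smooth_on W u" unfolding smooth_on_def
  proof
    fix k show "Ck_on k W u"
      by (rule deriv_Ck) (use du RR_Ck[OF uxR] RR_Ck[OF uyR] in auto)
  qed
  have lap: "laplacian u x = exp (2 * u x)" if x: "x \<in> W" for x
  proof -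
    have e1: "partial_x (partial_x u) x = partial_x ux x"
      by (rule partial_cong(1)[OF W x]) (use PX(1)[OF du] in auto)
    have e2: "partial_y (partial_y u) x = partial_y uy x"
      by (rule partial_cong(2)[OF W x]) (use PX(2)[OF du] in auto)
    note gx = G[OF qh nH x]
    note gy = G[OF iq niH x]
    have px: "partial_x ux x = Re (deriv q x) + Re (- deriv H x) * (1 / \<psi> x) + Re (- H x) * (Re (- H x) * (1 / \<psi> x * (1 / \<psi> x)))"
      using PX(1)[OF gx] deriv_cm(2)[OF Hh W x] unfolding ux_def by simp
    have py: "partial_y uy x = Re (\<i> * (\<i> * deriv q x)) + Re (\<i> * - (\<i> * deriv H x)) * (1 / \<psi> x) + Re (- (\<i> * H x)) * (Re (- (\<i> * H x)) * (1 / \<psi> x * (1 / \<psi> x)))"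
    proof -
      have d1: "deriv (\<lambda>y. \<i> * q y) x = \<i> * deriv q x" using deriv_cm(1)[OF qh W x] .
      have d2: "deriv (\<lambda>y. - (\<i> * H y)) x = - (\<i> * deriv H x)"
        using deriv_cm(2)[OF holomorphic_on_mult[OF holomorphic_on_const Hh] W x] deriv_cm(1)[OF Hh W x] by simp
      show ?thesis using PX(2)[OF gy] unfolding uy_def d1 d2 by simp
    qed
    have p: "\<psi> x > 0" using pos[OF x] .
    have "laplacian u x = (cmod (H x))^2 / (\<psi> x)^2"
      unfolding laplacian_def e1 e2 px py using alg2[OF p, of "deriv q x" "deriv H x" "H x"] by simp
    also have "\<dots> = (cmod (h x))^2 / (\<psi> x)^2" using Hn[OF x] by simp
    also have "\<dots> = exp (2 * u x)" unfolding u_def using exp2ln[of "cmod (h x)" "\<psi> x"] hnz[OF x] p by simp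
    finally show ?thesis .
  qed
  show ?thesis unfolding hyperbolic_on_def using sm lap unfolding u_def by blast
qed

end


lemma split1:
  fixes f :: "nat \<Rightarrow> 'a::real_normed_vector"
  assumes "summable (\<lambda>n. if n \<in> {k} then 0 else f n)"
  shows "summable f" and "suminf f = f k + (\<Sum>n. if n \<in> {k} then 0 else f n)"
proof -
  have s: "(\<lambda>n. (if n = k then f n else 0) + (if n \<in> {k} then 0 else f n)) sums (f k + (\<Sum>n. if n \<in> {k} then 0 else f n))"
    by (rule sums_add[OF sums_single summable_sums[OF assms]])
  have e: "(\<lambda>n. (if n = k then f n else 0) + (if n \<in> {k} then 0 else f n)) = f" by auto
  show "summable f" using s e by (metis sums_summable)
  show "suminf f = f k + (\<Sum>n. if n \<in> {k} then 0 else f n)" using s e by (metis sums_unique)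
qed

lemma far_half:
  assumes "r \<le> dist (z n) x0" "x \<in> ball x0 (r/2)"
  shows "r/2 \<le> cmod (x - z n)"
proof -
  have "dist (z n) x0 \<le> dist (z n) x + dist x x0" by (rule dist_triangle)
  moreover have "dist x x0 < r/2" using assms(2) by (simp add: dist_commute)
  moreover have "dist (z n) x = cmod (x - z n)" by (simp add: dist_norm norm_minus_commute)
  ultimately show ?thesis using assms(1) by linarith
qed

locale mainloc =
  fixes a :: "nat \<Rightarrow> real" and z :: "nat \<Rightarrow> complex"
  assumes apos: "\<forall>j. a j > 0"
    and asum: "summable a"
    and zinj: "inj z"
    and zdisc: "closed_discrete_in unit_disc (range z)"
begin

definition hf where "hf = (\<lambda>w. \<Sum>j. complex_of_real (a j) / (w - z j))"
definition phf where "phf = (\<lambda>w. \<Sum>j. a j * ln (cmod (w - z j)))"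
definition D1 where "D1 = unit_disc - range z"

lemma zD: "cmod (z n) < 1"
proof -
  have "z n \<in> range z" by simp
  then have "z n \<in> ball 0 1" using zdisc unfolding closed_discrete_in_def unit_disc_def by blast
  then show ?thesis by simp
qed

lemma zD': "z n \<in> unit_disc"
  using zdisc unfolding closed_discrete_in_def by auto

lemma sep:
  assumes x0: "x0 \<in> unit_disc"
  shows "\<exists>r>0. ball x0 r \<subseteq> unit_disc \<and> (\<forall>n. z n \<noteq> x0 \<longrightarrow> r \<le> dist (z n) x0)"
proof -
  obtain r1 where r1: "r1 > 0" "finite (range z \<inter> ball x0 r1)"
    using zdisc x0 unfolding closed_discrete_in_def by blast
  obtain \<delta> where d: "\<delta> > 0" "\<forall>x\<in>range z \<inter> ball x0 r1. x \<noteq> x0 \<longrightarrow> \<delta> \<le> dist x0 x"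
    using finite_set_avoid[OF r1(2), of x0] by blast
  obtain r2 where r2: "r2 > 0" "ball x0 r2 \<subseteq> unit_disc"
    using x0 unfolding unit_disc_def by (meson openE open_ball)
  define r where "r = min r1 (min \<delta> r2)"
  have "r > 0" using r1 d r2 by (simp add: r_def)
  moreover have "ball x0 r \<subseteq> unit_disc" using r2 by (auto simp: r_def)
  moreover have "r \<le> dist (z n) x0" if "z n \<noteq> x0" for n
  proof (cases "z n \<in> ball x0 r1")
    case True
    then have "\<delta> \<le> dist x0 (z n)" using d that by blast
    then show ?thesis by (simp add: r_def dist_commute)
  next
    case False
    then have "r1 \<le> dist x0 (z n)" by simp
    then show ?thesis by (simp add: r_def dist_commute)
  qed
  ultimately show ?thesis by blast
qed

lemma D1_open: "open D1"
proof (rule openI)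
  fix x0 assume x0: "x0 \<in> D1"
  then have x0': "x0 \<in> unit_disc" "\<forall>n. z n \<noteq> x0" unfolding D1_def by auto
  obtain r where r: "r > 0" "ball x0 r \<subseteq> unit_disc" "\<forall>n. z n \<noteq> x0 \<longrightarrow> r \<le> dist (z n) x0"
    using sep[OF x0'(1)] by blast
  have "ball x0 r \<subseteq> D1"
  proof
    fix y assume y: "y \<in> ball x0 r"
    have "y \<noteq> z n" for n
    proof
      assume "y = z n"
      then have "dist (z n) x0 < r" using y by (simp add: dist_commute)
      moreover have "r \<le> dist (z n) x0" using r(3) x0'(2) by blast
      ultimately show False by linarith
    qed
    then show "y \<in> D1" using y r(2) unfolding D1_def by auto
  qed
  then show "\<exists>e>0. ball x0 e \<subseteq> D1" using r(1) by blast
qed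

lemma loc_D1:
  assumes x0: "x0 \<in> D1"
  shows "\<exists>r>0. ball x0 r \<subseteq> D1 \<and> hf holomorphic_on ball x0 r \<and>
     (\<forall>x\<in>ball x0 r. summable (\<lambda>n. complex_of_real (a n) / (x - z n)) \<and>
        summable (\<lambda>n. a n * ln (cmod (x - z n))) \<and>
        (phf has_derivative (\<lambda>v. Re (hf x * v))) (at x))"
proof -
  have x0': "x0 \<in> unit_disc" "\<forall>n. z n \<noteq> x0" using x0 unfolding D1_def by auto
  obtain r where r: "r > 0" "ball x0 r \<subseteq> unit_disc" "\<forall>n. z n \<noteq> x0 \<longrightarrow> r \<le> dist (z n) x0"
    using sep[OF x0'(1)] by blast
  define B where "B = ball x0 (r/2)"
  have far: "r/2 \<le> cmod (x - z n)" if "n \<notin> {}" "x \<in> B" for n x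
  proof -
    have "r \<le> dist (z n) x0" using r(3) x0'(2) by blast
    then show ?thesis using far_half[of r z n x0 x] that(2) unfolding B_def by blast
  qed
  have Bsub: "B \<subseteq> ball 0 1" using subset_ball[of "r/2" r x0] r(1,2) unfolding B_def unit_disc_def by auto
  have r2: "r/2 > 0" using r by simp
  note H1 = ser_hol[where a=a and z=z and E="{}", OF apos asum open_ball[of x0 "r/2", folded B_def] r2 far]
  note H2 = ser_phi[where a=a and z=z and E="{}", OF apos asum open_ball[of x0 "r/2", folded B_def] convex_ball[of x0 "r/2", folded B_def] Bsub zD r2 far]
  have "B \<subseteq> D1"
  proof
    fix y assume y: "y \<in> B"
    have "y \<noteq> z n" for n using far[of n y] y r2 by auto
    then show "y \<in> D1" using y Bsub unfolding D1_def unit_disc_def by auto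
  qed
  moreover have "hf holomorphic_on B" using H1(2) unfolding hf_def by simp
  moreover have "\<forall>x\<in>B. summable (\<lambda>n. complex_of_real (a n) / (x - z n)) \<and>
        summable (\<lambda>n. a n * ln (cmod (x - z n))) \<and>
        (phf has_derivative (\<lambda>v. Re (hf x * v))) (at x)"
    using H1(1) H2 unfolding hf_def phf_def by simp
  ultimately show ?thesis using r2 unfolding B_def by blast
qed

lemma hf_hol: "hf holomorphic_on D1"
  unfolding holomorphic_on_open[OF D1_open]
proof
  fix x assume "x \<in> D1"
  then obtain r where r: "r > 0" "hf holomorphic_on ball x r" using loc_D1 by blast
  have "(hf has_field_derivative deriv hf x) (at x)"
    using holomorphic_derivI[OF r(2) open_ball] r(1) by simp
  then show "\<exists>f'. (hf has_field_derivative f') (at x)" by blast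
qed

lemma phf_deriv: "x \<in> D1 \<Longrightarrow> (phf has_derivative (\<lambda>v. Re (hf x * v))) (at x)"
  using loc_D1 by fastforce

lemma phf_summable: "x \<in> D1 \<Longrightarrow> summable (\<lambda>n. a n * ln (cmod (x - z n)))"
  using loc_D1 by fastforce

lemma phf_le: assumes x: "x \<in> D1" shows "phf x \<le> 2 * suminf a"
proof -
  have "a n * ln (cmod (x - z n)) \<le> a n * 2" for n
  proof -
    have "x \<noteq> z n" using x unfolding D1_def by auto
    then have tp: "cmod (x - z n) > 0" by simp
    have "cmod x < 1" using x unfolding D1_def unit_disc_def by auto
    moreover have "cmod (x - z n) \<le> cmod x + cmod (z n)" by (rule norm_triangle_ineq4)
    ultimately have "cmod (x - z n) < 2" using zD[of n] by linarith
    moreover have "ln (cmod (x - z n)) \<le> cmod (x - z n) - 1" using ln_le_minus_one[OF tp] .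
    ultimately have "ln (cmod (x - z n)) \<le> 2" by linarith
    then show ?thesis using apos by (intro mult_left_mono) (auto simp: less_imp_le)
  qed
  then have "(\<Sum>n. a n * ln (cmod (x - z n))) \<le> (\<Sum>n. a n * 2)"
    by (intro suminf_le phf_summable[OF x] summable_mult2[OF asum]) 
  then show ?thesis unfolding phf_def using suminf_mult2[OF asum, of 2] by (simp add: mult.commute)
qed

end


lemma cont_at_of_open:
  assumes "continuous_on S f" "open S" "x \<in> S"
  shows "isCont f x"
  using assms continuous_on_eq_continuous_at by blast

context mainloc
begin

lemma pole_loc:
  "\<exists>r>0. \<exists>g \<Phi>. g holomorphic_on ball (z k) r \<and> g (z k) = complex_of_real (a k) \<and>
     continuous_on (ball (z k) r) \<Phi> \<and>
     (\<forall>x\<in>ball (z k) r - {z k}. x \<in> D1 \<and> hf x = g x / (x - z k) \<and>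
        phf x = a k * ln (cmod (x - z k)) + \<Phi> x)"
proof -
  obtain r where r: "r > 0" "ball (z k) r \<subseteq> unit_disc" "\<forall>n. z n \<noteq> z k \<longrightarrow> r \<le> dist (z n) (z k)"
    using sep[OF zD'[of k]] by blast
  define B where "B = ball (z k) (r/2)"
  have far: "r/2 \<le> cmod (x - z n)" if "n \<notin> {k}" "x \<in> B" for n x
  proof -
    have "z n \<noteq> z k" using that(1) zinj by (auto dest: injD)
    then have "r \<le> dist (z n) (z k)" using r(3) by blast
    then show ?thesis using far_half[of r z n "z k" x] that(2) unfolding B_def by blast
  qed
  have Bsub: "B \<subseteq> ball 0 1" using subset_ball[of "r/2" r "z k"] r(1,2) unfolding B_def unit_disc_def by auto
  have r2: "r/2 > 0" using r by simp
  note H1 = ser_hol[where a=a and z=z and E="{k}", OF apos asum open_ball[of "z k" "r/2", folded B_def] r2 far]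
  note H2 = ser_phi[where a=a and z=z and E="{k}", OF apos asum open_ball[of "z k" "r/2", folded B_def] convex_ball[of "z k" "r/2", folded B_def] Bsub zD r2 far]
  define T where "T = (\<lambda>x. \<Sum>n. if n \<in> {k} then 0 else complex_of_real (a n) / (x - z n))"
  define \<Phi> where "\<Phi> = (\<lambda>x. \<Sum>n. if n \<in> {k} then 0 else a n * ln (cmod (x - z n)))"
  define g where "g = (\<lambda>x. complex_of_real (a k) + (x - z k) * T x)"
  have Th: "T holomorphic_on B" using H1(2) unfolding T_def .
  have gh: "g holomorphic_on B" unfolding g_def using Th by (auto intro!: holomorphic_intros)
  have Pc: "continuous_on B \<Phi>"
  proof (rule continuous_at_imp_continuous_on, rule ballI)
    fix x assume "x \<in> B"
    then have "(\<Phi> has_derivative (\<lambda>v. Re ((\<Sum>n. if n \<in> {k} then 0 else complex_of_real (a n) / (x - z n)) * v))) (at x)"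
      using H2(2) unfolding \<Phi>_def by blast
    then show "isCont \<Phi> x" by (rule has_derivative_continuous)
  qed
  have main: "x \<in> D1 \<and> hf x = g x / (x - z k) \<and> phf x = a k * ln (cmod (x - z k)) + \<Phi> x"
    if x: "x \<in> B - {z k}" for x
  proof (intro conjI)
    have "x \<noteq> z n" for n
    proof (cases "n = k")
      case True then show ?thesis using x by simp
    next
      case False then show ?thesis using far[of n x] x r2 by auto
    qed
    then show "x \<in> D1" using x Bsub unfolding D1_def unit_disc_def by auto
    have s1: "summable (\<lambda>n. if n \<in> {k} then 0 else complex_of_real (a n) / (x - z n))" using H1(1) x by blast
    have "hf x = complex_of_real (a k) / (x - z k) + T x"
      unfolding hf_def T_def using split1(2)[OF s1] by simp
    also have "\<dots> = g x / (x - z k)" using x unfolding g_def by (simp add: field_simps)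
    finally show "hf x = g x / (x - z k)" .
    have s2: "summable (\<lambda>n. if n \<in> {k} then 0 else a n * ln (cmod (x - z n)))" using H2(1) x by blast
    show "phf x = a k * ln (cmod (x - z k)) + \<Phi> x"
      unfolding phf_def \<Phi>_def using split1(2)[OF s2] by simp
  qed
  show ?thesis
    by (rule exI[of _ "r/2"], rule conjI[OF r2], rule exI[of _ g], rule exI[of _ \<Phi>])
       (use gh Pc main in \<open>auto simp: B_def g_def\<close>)
qed

lemma has_pole: "has_pole_at hf (z k)"
proof -
  obtain r g \<Phi> where r: "r > 0" "g holomorphic_on ball (z k) r" "g (z k) = complex_of_real (a k)"
     "\<forall>x\<in>ball (z k) r - {z k}. x \<in> D1 \<and> hf x = g x / (x - z k)"
    using pole_loc[of k] by blast
  have "g (z k) \<noteq> 0" using r(3) apos by (metis of_real_eq_0_iff order_less_irrefl)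
  then show ?thesis unfolding has_pole_at_def
    by (intro exI[of _ r] conjI exI[of _ "1::nat"] exI[of _ g]) (use r in auto)
qed

lemma meromorphic: "meromorphic_with_poles hf unit_disc (range z)"
  unfolding meromorphic_with_poles_def using zdisc hf_hol has_pole D1_def by auto

lemma nonconst: "\<exists>w0\<in>D1. hf w0 \<noteq> 0"
proof -
  obtain r g \<Phi> where r: "r > 0" "g holomorphic_on ball (z 0) r" "g (z 0) = complex_of_real (a 0)"
     "\<forall>x\<in>ball (z 0) r - {z 0}. x \<in> D1 \<and> hf x = g x / (x - z 0)"
    using pole_loc[of 0] by blast
  have "isCont g (z 0)"
    by (rule cont_at_of_open[OF holomorphic_on_imp_continuous_on[OF r(2)] open_ball]) (use r in simp)
  moreover have "g (z 0) \<noteq> 0" using r(3) apos by (metis of_real_eq_0_iff order_less_irrefl)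
  ultimately obtain e where e: "e > 0" "\<forall>y. dist (z 0) y < e \<longrightarrow> g y \<noteq> 0"
    using continuous_at_avoid by blast
  define t where "t = min e r / 2"
  have t: "t > 0" "t < e" "t < r" using e r by (auto simp: t_def)
  define w0 where "w0 = z 0 + complex_of_real t"
  have d: "dist (z 0) w0 = t" using t by (simp add: w0_def dist_norm)
  have w0: "w0 \<in> ball (z 0) r - {z 0}" using d t by (auto simp: w0_def)
  then have "w0 \<in> D1" "hf w0 = g w0 / (w0 - z 0)" using r(4) by auto
  moreover have "g w0 \<noteq> 0" using e d t by auto
  moreover have "w0 - z 0 \<noteq> 0" using w0 by auto
  ultimately have "hf w0 \<noteq> 0" by simp
  then show ?thesis using \<open>w0 \<in> D1\<close> by blast
qed

lemma D1_conn: "connected D1"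
  unfolding D1_def unit_disc_def
  by (rule connected_open_diff_countable) auto

lemma zeros:
  assumes w: "w \<in> D1" "hf w = 0"
  shows "\<exists>l r g. l > 0 \<and> r > 0 \<and> cball w r \<subseteq> D1 \<and> g holomorphic_on cball w r \<and>
     (\<forall>x\<in>cball w r. hf x = g x * (x - w) ^ l \<and> g x \<noteq> 0)"
proof -
  note Z = zorder_exist_zero[OF hf_hol D1_open D1_conn w(1) nonconst]
  from Z have "zorder hf w > 0" using w(2) by simp
  moreover from Z obtain r where "r > 0" "cball w r \<subseteq> D1" "zor_poly hf w holomorphic_on cball w r"
    "\<forall>x\<in>cball w r. hf x = zor_poly hf w x * (x - w) ^ nat (zorder hf w) \<and> zor_poly hf w x \<noteq> 0"
    by blast
  ultimately show ?thesis by (intro exI[of _ "nat (zorder hf w)"] exI[of _ r] exI[of _ "zor_poly hf w"]) auto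
qed

end


context mainloc
begin

definition U where "U lam x = ln (cmod (hf x)) - ln (lam - phf x)"

lemma psi_pos: "x \<in> D1 \<Longrightarrow> lam > 2 * suminf a \<Longrightarrow> lam - phf x > 0"
  using phf_le[of x] by linarith

lemma cone:
  assumes lam: "lam > 2 * suminf a" and w: "w \<in> D1" "hf w = 0"
  shows "\<exists>l. zero_of_order hf w l \<and> cone_sing (U lam) w (real l + 1)"
proof -
  obtain l r g where A: "l > 0" "r > 0" "cball w r \<subseteq> D1" "g holomorphic_on cball w r"
    "\<forall>x\<in>cball w r. hf x = g x * (x - w) ^ l \<and> g x \<noteq> 0"
    using zeros[OF w] by blast
  have gb: "g holomorphic_on ball w r" using A(4) ball_subset_cball holomorphic_on_subset by blast
  have Z: "zero_of_order hf w l" unfolding zero_of_order_def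
    by (intro conjI exI[of _ r] exI[of _ g]) (use A gb in \<open>auto simp: mult.commute\<close>)
  have gc: "(g \<longlongrightarrow> g w) (at w)"
    using cont_at_of_open[OF holomorphic_on_imp_continuous_on[OF gb] open_ball] A(2)
    by (simp add: isCont_def)
  have pc: "(phf \<longlongrightarrow> phf w) (at w)"
    using has_derivative_continuous[OF phf_deriv[OF w(1)]] by (simp add: isCont_def)
  have gw: "cmod (g w) \<noteq> 0" using A(2,5) by simp
  have pw: "lam - phf w \<noteq> 0" using psi_pos[OF w(1) lam] by simp
  have lim: "((\<lambda>x. ln (cmod (g x)) - ln (lam - phf x)) \<longlongrightarrow> ln (cmod (g w)) - ln (lam - phf w)) (at w)"
    by (intro tendsto_diff tendsto_ln tendsto_norm gc tendsto_const pc gw pw)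
  have ev: "eventually (\<lambda>x. ln (cmod (g x)) - ln (lam - phf x) = U lam x - (real l + 1 - 1) * ln (cmod (x - w))) (at w)"
    unfolding eventually_at
  proof (intro exI[of _ r] conjI ballI impI allI)
    fix x assume x: "x \<noteq> w \<and> dist x w < r"
    then have xc: "x \<in> cball w r" by (simp add: dist_commute)
    have "hf x = g x * (x - w) ^ l" "g x \<noteq> 0" using A(5) xc by auto
    then have "cmod (hf x) = cmod (g x) * cmod (x - w) ^ l" "cmod (g x) \<noteq> 0" "cmod (x - w) \<noteq> 0"
      using x by (auto simp: norm_mult norm_power)
    then have "ln (cmod (hf x)) = ln (cmod (g x)) + real l * ln (cmod (x - w))"
      by (simp add: ln_mult ln_realpow)
    then show "ln (cmod (g x)) - ln (lam - phf x) = U lam x - (real l + 1 - 1) * ln (cmod (x - w))"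
      unfolding U_def by simp
  qed (use A(2) in auto)
  have "cone_sing (U lam) w (real l + 1)"
    unfolding cone_sing_def using tendsto_cong[OF ev] lim by blast
  then show ?thesis using Z by blast
qed

lemma cusp:
  assumes lam: "lam > 2 * suminf a"
  shows "cusp_sing (U lam) (z k)"
proof -
  obtain r g \<Phi> where A: "r > 0" "g holomorphic_on ball (z k) r" "g (z k) = complex_of_real (a k)"
     "continuous_on (ball (z k) r) \<Phi>"
     "\<forall>x\<in>ball (z k) r - {z k}. x \<in> D1 \<and> hf x = g x / (x - z k) \<and> phf x = a k * ln (cmod (x - z k)) + \<Phi> x"
    using pole_loc[of k] by blast
  have ak: "a k > 0" using apos by blast
  have gci: "isCont g (z k)"
    by (rule cont_at_of_open[OF holomorphic_on_imp_continuous_on[OF A(2)] open_ball]) (use A in simp)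
  have gk: "g (z k) \<noteq> 0" using A(3) ak by simp
  obtain e where e: "e > 0" "\<forall>y. dist (z k) y < e \<longrightarrow> g y \<noteq> 0"
    using continuous_at_avoid[OF gci gk] by blast
  have Pc: "isCont \<Phi> (z k)" by (rule cont_at_of_open[OF A(4) open_ball]) (use A in simp)
  define d where "d = min r (min e 1)"
  have d: "d > 0" using A(1) e(1) by (simp add: d_def)
  define Q where "Q = (\<lambda>x. (lam - \<Phi> x) / (- ln (cmod (x - z k))) + a k)"
  have ev: "eventually (\<lambda>x. ln (cmod (g x)) - ln (Q x) = U lam x + ln (cmod (x - z k)) + ln (- ln (cmod (x - z k)))) (at (z k))"
    unfolding eventually_at
  proof (intro exI[of _ d] conjI ballI impI allI)
    fix x assume x: "x \<noteq> z k \<and> dist x (z k) < d"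
    define t where "t = cmod (x - z k)"
    have t: "t > 0" "t < 1" using x by (auto simp: t_def d_def dist_norm)
    define L where "L = - ln t"
    have L: "L > 0" using t by (simp add: L_def)
    have xb: "x \<in> ball (z k) r - {z k}" using x by (auto simp: d_def dist_commute)
    then have B: "x \<in> D1" "hf x = g x / (x - z k)" "phf x = a k * ln t + \<Phi> x"
      using A(5) by (auto simp: t_def)
    have gx: "g x \<noteq> 0" using e x by (auto simp: d_def dist_commute)
    have hx: "cmod (hf x) = cmod (g x) / t" using B(2) by (simp add: norm_divide t_def)
    have pp: "lam - phf x > 0" using psi_pos[OF B(1) lam] .
    have LQ: "lam - phf x = L * Q x" using L unfolding Q_def B(3) L_def[symmetric] t_def[symmetric]
      by (simp add: field_simps L_def)
    have Qp: "Q x > 0" using pp L LQ by (metis zero_less_mult_pos)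
    have "U lam x = ln (cmod (g x)) - ln t - (ln L + ln (Q x))"
      unfolding U_def hx LQ using gx t L Qp by (simp add: ln_div ln_mult)
    then show "ln (cmod (g x)) - ln (Q x) = U lam x + ln (cmod (x - z k)) + ln (- ln (cmod (x - z k)))"
      unfolding t_def[symmetric] L_def[symmetric] by simp
  qed (rule d)
  have t0: "((\<lambda>x. cmod (x - z k)) \<longlongrightarrow> 0) (at (z k))"
  proof -
    have "((\<lambda>x. x - z k) \<longlongrightarrow> z k - z k) (at (z k))" by (intro tendsto_intros)
    then show ?thesis by (intro tendsto_norm_zero) simp
  qed
  have "filterlim (\<lambda>x. cmod (x - z k)) (at_right 0) (at (z k))"
    unfolding filterlim_at using t0 by (auto simp: eventually_at_filter)
  from filterlim_compose[OF ln_at_0 this]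
  have "filterlim (\<lambda>x. ln (cmod (x - z k))) at_bot (at (z k))" .
  then have "filterlim (\<lambda>x. - ln (cmod (x - z k))) at_top (at (z k))"
    by (simp add: filterlim_uminus_at_top)
  then have Linf: "filterlim (\<lambda>x. - ln (cmod (x - z k))) at_infinity (at (z k))"
    by (rule filterlim_at_top_imp_at_infinity)
  have Pl: "((\<lambda>x. lam - \<Phi> x) \<longlongrightarrow> lam - \<Phi> (z k)) (at (z k))"
    using Pc by (intro tendsto_intros) (simp add: isCont_def)
  have Ql: "(Q \<longlongrightarrow> 0 + a k) (at (z k))"
    unfolding Q_def by (intro tendsto_add tendsto_const tendsto_divide_0[OF Pl Linf])
  have gl: "(g \<longlongrightarrow> g (z k)) (at (z k))" using gci by (simp add: isCont_def)
  have lim: "((\<lambda>x. ln (cmod (g x)) - ln (Q x)) \<longlongrightarrow> ln (cmod (g (z k))) - ln (0 + a k)) (at (z k))"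
    by (intro tendsto_diff tendsto_ln tendsto_norm gl Ql) (use gk ak in auto)
  show ?thesis unfolding cusp_sing_def using tendsto_cong[OF ev] lim by blast
qed

lemma hyp:
  assumes lam: "lam > 2 * suminf a"
  shows "hyperbolic_on {x \<in> D1. hf x \<noteq> 0} (U lam)"
proof -
  define D0 where "D0 = {x \<in> D1. hf x \<noteq> 0}"
  have D0eq: "D0 = D1 \<inter> hf -` (- {0})" unfolding D0_def by auto
  have oD0: "open D0" unfolding D0eq
    by (rule continuous_open_preimage[OF holomorphic_on_imp_continuous_on[OF hf_hol] D1_open]) auto
  have sub: "D0 \<subseteq> D1" unfolding D0_def by auto
  interpret hs: hyp_setup D0 "\<lambda>x. lam - phf x" "\<lambda>x. - hf x"
  proof
    show "open D0" by (rule oD0)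
    show "\<And>x. x \<in> D0 \<Longrightarrow> lam - phf x > 0" using psi_pos lam sub by blast
    show "(\<lambda>x. - hf x) holomorphic_on D0"
      using holomorphic_on_minus[OF holomorphic_on_subset[OF hf_hol sub]] .
    fix x assume x: "x \<in> D0"
    have "((\<lambda>x. lam - phf x) has_derivative (\<lambda>v. 0 - Re (hf x * v))) (at x)"
      using has_derivative_diff[OF has_derivative_const phf_deriv] x sub by blast
    then show "((\<lambda>x. lam - phf x) has_derivative (\<lambda>v. Re (- hf x * v))) (at x)" by simp
  qed
  have "hyperbolic_on D0 (\<lambda>x. ln (cmod (hf x)) - ln (lam - phf x))"
    by (rule hs.hyp_main) (use holomorphic_on_subset[OF hf_hol sub] D0_def in auto)
  moreover have "(\<lambda>x. ln (cmod (hf x)) - ln (lam - phf x)) = U lam" by (simp add: fun_eq_iff U_def)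
  ultimately show ?thesis unfolding D0_def by simp
qed

lemma distinct_U:
  assumes "lam > 2 * suminf a" "\<mu> > 2 * suminf a" "lam \<noteq> \<mu>"
  shows "\<exists>x\<in>{x \<in> D1. hf x \<noteq> 0}. U lam x \<noteq> U \<mu> x"
proof -
  obtain w0 where w0: "w0 \<in> D1" "hf w0 \<noteq> 0" using nonconst by blast
  have "lam - phf w0 > 0" "\<mu> - phf w0 > 0" using psi_pos[OF w0(1)] assms by auto
  then have "ln (lam - phf w0) \<noteq> ln (\<mu> - phf w0)" using assms(3) by simp
  then have "U lam w0 \<noteq> U \<mu> w0" unfolding U_def by simp
  then show ?thesis using w0 by blast
qed

end

theorem mainTheorem6:
  fixes a :: "nat \<Rightarrow> real" and z :: "nat \<Rightarrow> complex"
  assumes apos: "\<forall>j. a j > 0"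
    and asum: "summable a"
    and zinj: "inj z"
    and zdisc: "closed_discrete_in unit_disc (range z)"
  shows "let h = (\<lambda>w. \<Sum>j. complex_of_real (a j) / (w - z j));
             S = range z \<union> {w \<in> unit_disc - range z. h w = 0}
         in meromorphic_with_poles h unit_disc (range z) \<and>
            (\<exists>(lam0::real) (U :: real \<Rightarrow> complex \<Rightarrow> real).
               (\<forall>lam>lam0.
                  hyperbolic_on (unit_disc - S) (U lam) \<and>
                  (\<forall>j. cusp_sing (U lam) (z j)) \<and>
                  (\<forall>w\<in>unit_disc - range z. h w = 0 \<longrightarrow>
                     (\<exists>l. zero_of_order h w l \<and> cone_sing (U lam) w (real l + 1)))) \<and>
               (\<forall>lam>lam0. \<forall>\<mu>>lam0. lam \<noteq> \<mu> \<longrightarrow> (\<exists>x\<in>unit_disc - S. U lam x \<noteq> U \<mu> x)))"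
proof -
  interpret m: mainloc a z using assms by unfold_locales
  have hdef: "(\<lambda>w. \<Sum>j. complex_of_real (a j) / (w - z j)) = m.hf" by (simp add: m.hf_def)
  have Seq: "unit_disc - (range z \<union> {w \<in> unit_disc - range z. m.hf w = 0}) = {x \<in> m.D1. m.hf x \<noteq> 0}"
    unfolding m.D1_def by auto
  show ?thesis
    unfolding Let_def hdef Seq
  proof (intro conjI exI[of _ "2 * suminf a"] exI[of _ m.U] allI impI ballI)
    show "meromorphic_with_poles m.hf unit_disc (range z)" by (rule m.meromorphic)
  next
    fix lam assume "lam > 2 * suminf a"
    then show "hyperbolic_on {x \<in> m.D1. m.hf x \<noteq> 0} (m.U lam)" by (rule m.hyp)
  next
    fix lam j assume "lam > 2 * suminf a"
    then show "cusp_sing (m.U lam) (z j)" by (rule m.cusp)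
  next
    fix lam w assume "lam > 2 * suminf a" "w \<in> unit_disc - range z" "m.hf w = 0"
    then show "\<exists>l. zero_of_order m.hf w l \<and> cone_sing (m.U lam) w (real l + 1)"
      using m.cone unfolding m.D1_def by blast
  next
    fix lam \<mu> assume "lam > 2 * suminf a" "\<mu> > 2 * suminf a" "lam \<noteq> \<mu>"
    then show "\<exists>x\<in>{x \<in> m.D1. m.hf x \<noteq> 0}. m.U lam x \<noteq> m.U \<mu> x" by (rule m.distinct_U)
  qed
qed


end
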